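(* Let $w,x\in\{0,1\}^{\mathbb Z}$ be periodic with $w\le x$, let $\rho$ be the unique $\sigma\times\sigma$-invariant probability measure on the (finite) orbit of $(w,x)$, and let $\varphi\colon\{0,1\}^{\mathbb Z}\to\mathbb R$ be of the form $\varphi(y)=\varphi(y_0,y_1)$. Then \[ \mathcal P_{[w,x],\varphi}=\log_2\lambda_++\sum_{a,b\in\{0,1\}}\sum_{\ell\ge2}m_{a,b}^\ell\log_2C_{a,b}^++\sum_{a,b\in\{0,1\}}\sum_{\ell\ge2}m_{a,b}^\ell\log_2\Big(1+\frac{C_{a,b}^-}{C_{a,b}^+}\Big(\frac{\lambda_-}{\lambda_+}\Big)^{\ell-1}\Big), \] where $m_{a,b}^\ell:=\rho\big(\{(u,v):u_0=a,\ v_0=a,\ u_j=0,\ v_j=1\ (1\le j\le\ell-2),\ u_{\ell-1}=v_{\ell-1}=b\}\big)$ (all sums are finite).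
   Context: $\sigma$ is the left shift; $\le$ is coordinatewise; $[w,x]=\{\sigma^ny:w\le y\le x,\ n\in\mathbb Z\}$ (closed here since $w,x$ are periodic). Let $\mathbf M=\begin{pmatrix}2^{\varphi(0,0)}&2^{\varphi(0,1)}\\2^{\varphi(1,0)}&2^{\varphi(1,1)}\end{pmatrix}$; it has two distinct real eigenvalues $\lambda_-<\lambda_+$ with $\lambda_+>|\lambda_-|$, $\lambda_+>0$. For $a,b\in\{0,1\}$ the constants $C_{a,b}^\pm$ are the unique reals with $(\mathbf M^{n-1})_{a,b}=C_{a,b}^+\lambda_+^{n-1}+C_{a,b}^-\lambda_-^{n-1}$ for all $n\ge1$; one has $C_{a,b}^+>0$. Topological pressure: $\mathcal P_{X,\varphi}=\lim_n\frac1n\log_2\sum_{A\in\mathcal L_n(X)}2^{\sup_{y\in A}\varphi^{(n)}(y)}$, with $\mathcal L_n(X)$ the $n$-blocks of $X$ and $\varphi^{(n)}=\sum_{j<n}\varphi\circ\sigma^j$. *)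

theory Defs
  imports "HOL-Analysis.Analysis" "HOL-Probability.Probability"
begin

text \<open>Points of the full shift: bi-infinite 0/1 sequences, with False = 0, True = 1.
  The order on \<open>int \<Rightarrow> bool\<close> is the pointwise (coordinatewise) order.\<close>

type_synonym seq = "int \<Rightarrow> bool"

definition shift :: "int \<Rightarrow> seq \<Rightarrow> seq" where
  "shift n y = (\<lambda>i. y (i + n))"

definition periodic :: "seq \<Rightarrow> bool" where
  "periodic y \<longleftrightarrow> (\<exists>p::int. p > 0 \<and> (\<forall>i. y (i + p) = y i))"

definition interval_set :: "seq \<Rightarrow> seq \<Rightarrow> seq set" where
  "interval_set w x = {shift n y | y n. w \<le> y \<and> y \<le> x}"

definition pair_orbit :: "seq \<Rightarrow> seq \<Rightarrow> (seq \<times> seq) set" where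
  "pair_orbit w x = {(shift n w, shift n x) | n. True}"

definition blocks :: "seq set \<Rightarrow> nat \<Rightarrow> bool list set" where
  "blocks X n = {A. \<exists>y\<in>X. \<exists>k::int. A = map (\<lambda>i. y (k + int i)) [0..<n]}"

definition birkhoff :: "(seq \<Rightarrow> real) \<Rightarrow> nat \<Rightarrow> seq \<Rightarrow> real" where
  "birkhoff \<phi> n y = (\<Sum>j<n. \<phi> (shift (int j) y))"

text \<open>The n-th term of the sequence whose limit is the topological pressure;
  the sup over \<open>y \<in> A\<close> ranges over the points of X in the cylinder of A.\<close>
definition pressure_seq :: "seq set \<Rightarrow> (seq \<Rightarrow> real) \<Rightarrow> nat \<Rightarrow> real" where
  "pressure_seq X \<phi> n = (1 / real n) * log 2
     (\<Sum>A\<in>blocks X n. 2 powr (SUP y\<in>{y\<in>X. map (\<lambda>i. y (int i)) [0..<n] = A}. birkhoff \<phi> n y))"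

primrec matpow :: "real^bool^bool \<Rightarrow> nat \<Rightarrow> real^bool^bool" where
  "matpow A 0 = mat 1"
| "matpow A (Suc n) = A ** matpow A n"

definition is_eigenvalue :: "real^bool^bool \<Rightarrow> real \<Rightarrow> bool" where
  "is_eigenvalue A l \<longleftrightarrow> (\<exists>v. v \<noteq> 0 \<and> A *v v = l *\<^sub>R v)"

end

theory Submission
  imports Defs
begin


lemma UNIV_bool': "(UNIV::bool set) = {False, True}" by auto

lemma sum_bool: "(\<Sum>c\<in>(UNIV::bool set). g c) = g False + g True"
  by (simp add: UNIV_bool')

lemma matpow_Suc_right: "matpow A (Suc n) = matpow A n ** A"
  by (induction n) (simp_all add: matrix_mul_lid matrix_mul_rid matrix_mul_assoc)

lemma matpow_add: "matpow A (m + n) = matpow A m ** matpow A n"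
  by (induction m) (simp_all add: matrix_mul_lid matrix_mul_assoc)

lemma matmul_entry: "(A ** B) $ i $ j = (\<Sum>k\<in>UNIV. A $ i $ k * B $ k $ j)"
  by (simp add: matrix_matrix_mult_def)

lemma mat1_entry: "(mat 1 :: real^bool^bool) $ i $ j = (if i = j then 1 else 0)"
  by (simp add: mat_def)

lemma matpow_nonneg:
  assumes "\<And>a b. A $ a $ b \<ge> (0::real)"
  shows "matpow A n $ a $ b \<ge> 0"
proof (induction n arbitrary: a b)
  case 0 then show ?case by (simp add: mat1_entry)
next
  case (Suc n) then show ?case
    by (simp add: matmul_entry assms sum_nonneg)
qed

lemma matpow_pos:
  assumes "\<And>a b. A $ a $ b > (0::real)"
  shows "matpow A (Suc n) $ a $ b > 0"
proof (induction n arbitrary: a b)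
  case 0 then show ?case using assms by (simp add: matmul_entry sum_bool mat1_entry)
next
  case (Suc n)
  have "matpow A (Suc (Suc n)) $ a $ b = (\<Sum>k\<in>UNIV. A $ a $ k * matpow A (Suc n) $ k $ b)"
    by (simp add: matmul_entry)
  also have "\<dots> > 0" using Suc assms
    by (simp add: sum_bool add_pos_pos)
  finally show ?case .
qed

lemma matpow_scale_entry:
  "matpow (\<chi> a b. A $ a $ b / (c::real)) n $ a $ b = matpow A n $ a $ b / c ^ n"
proof (induction n arbitrary: a b)
  case 0 then show ?case by (simp add: mat1_entry)
next
  case (Suc n)
  have "matpow (\<chi> a b. A $ a $ b / c) (Suc n) $ a $ b
      = (\<Sum>k\<in>UNIV. (A $ a $ k / c) * (matpow A n $ k $ b / c ^ n))"
    by (simp add: matmul_entry Suc)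
  also have "\<dots> = (\<Sum>k\<in>UNIV. A $ a $ k * matpow A n $ k $ b) / c ^ Suc n"
    by (simp add: sum_divide_distrib)
  also have "\<dots> = matpow A (Suc n) $ a $ b / c ^ Suc n" by (simp add: matmul_entry)
  finally show ?case .
qed

lemma matpow_eigen:
  assumes "A *v v = l *\<^sub>R v"
  shows "matpow A n *v v = l ^ n *\<^sub>R v"
proof (induction n)
  case 0 then show ?case by (simp add: matrix_vector_mul_lid)
next
  case (Suc n)
  have "matpow A (Suc n) *v v = A *v (matpow A n *v v)"
    by (simp add: matrix_vector_mul_assoc)
  also have "\<dots> = l ^ Suc n *\<^sub>R v" using Suc assms
    by (simp add: matrix_vector_mult_scaleR)
  finally show ?case .
qed

locale ctx6 =
  fixes w x :: seq
    and f :: "bool \<Rightarrow> bool \<Rightarrow> real"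
    and lp lm :: real
    and Cp Cm :: "bool \<Rightarrow> bool \<Rightarrow> real"
  assumes per_w: "periodic w" and per_x: "periodic x" and wx: "w \<le> x"
    and eig_p: "is_eigenvalue (\<chi> a b. 2 powr f a b) lp"
    and eig_m: "is_eigenvalue (\<chi> a b. 2 powr f a b) lm"
    and lmp: "lm < lp" and lp_pos: "lp > 0" and lp_abs: "lp > \<bar>lm\<bar>"
    and Crep: "\<And>a b n. n \<ge> 1 \<Longrightarrow>
           matpow (\<chi> a b. 2 powr f a b) (n - 1) $ a $ b = Cp a b * lp ^ (n - 1) + Cm a b * lm ^ (n - 1)"
begin

definition "M = (\<chi> a b. 2 powr f a b)"
definition "N = (\<chi> a b. M $ a $ b / lp)"

lemma M_entry: "M $ a $ b = 2 powr f a b" by (simp add: M_def)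
lemma M_pos: "M $ a $ b > 0" by (simp add: M_entry)

lemma Crep': "matpow M k $ a $ b = Cp a b * lp ^ k + Cm a b * lm ^ k"
  using Crep[of "Suc k" a b] by (simp add: M_def)

lemma N_pow: "matpow N k $ a $ b = matpow M k $ a $ b / lp ^ k"
  unfolding N_def by (rule matpow_scale_entry)

lemma N_pow_C: "matpow N k $ a $ b = Cp a b + Cm a b * (lm / lp) ^ k"
  using lp_pos by (simp add: N_pow Crep' field_simps power_divide)

lemma N_pos: "N $ a $ b > 0" using lp_pos M_pos by (simp add: N_def)

lemma N_pow_pos: "k \<ge> 1 \<Longrightarrow> matpow N k $ a $ b > 0"
  using matpow_pos[OF N_pos, of "k - 1" a b] by simp

lemma ratio_lim: "(\<lambda>k. (lm / lp) ^ k) \<longlonglongrightarrow> 0"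
  apply (rule LIMSEQ_power_zero)
  using lp_abs lp_pos by (simp add: abs_divide)

lemma N_pow_lim: "(\<lambda>k. matpow N k $ a $ b) \<longlonglongrightarrow> Cp a b"
proof -
  have "(\<lambda>k. Cp a b + Cm a b * (lm / lp) ^ k) \<longlonglongrightarrow> Cp a b + Cm a b * 0"
    by (intro tendsto_intros ratio_lim)
  then show ?thesis by (simp add: N_pow_C)
qed

lemma N_pow_lim_Suc: "(\<lambda>k. matpow N (Suc k) $ a $ b) \<longlonglongrightarrow> Cp a b"
  using N_pow_lim LIMSEQ_Suc by blast

lemma Cp_nonneg: "Cp a b \<ge> 0"
  by (rule LIMSEQ_le_const[OF N_pow_lim]) (auto intro: matpow_nonneg less_imp_le N_pos)

lemma Cp_left: "Cp a b \<ge> N $ a $ c * Cp c b"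
proof (rule LIMSEQ_le[OF _ N_pow_lim_Suc])
  show "(\<lambda>k. N $ a $ c * matpow N k $ c $ b) \<longlonglongrightarrow> N $ a $ c * Cp c b"
    by (intro tendsto_intros N_pow_lim)
  show "\<exists>K. \<forall>k\<ge>K. N $ a $ c * matpow N k $ c $ b \<le> matpow N (Suc k) $ a $ b"
  proof (intro exI allI impI)
    fix k
    have nn: "\<And>d. 0 \<le> N $ a $ d * matpow N k $ d $ b"
      using N_pos by (intro mult_nonneg_nonneg matpow_nonneg less_imp_le) auto
    have "N $ a $ c * matpow N k $ c $ b \<le> (\<Sum>d\<in>UNIV. N $ a $ d * matpow N k $ d $ b)"
      by (rule member_le_sum) (use nn in auto)
    then show "N $ a $ c * matpow N k $ c $ b \<le> matpow N (Suc k) $ a $ b"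
      by (simp add: matmul_entry)
  qed
qed

lemma Cp_right: "Cp a b \<ge> Cp a c * N $ c $ b"
proof (rule LIMSEQ_le[OF _ N_pow_lim_Suc])
  show "(\<lambda>k. matpow N k $ a $ c * N $ c $ b) \<longlonglongrightarrow> Cp a c * N $ c $ b"
    by (intro tendsto_intros N_pow_lim)
  show "\<exists>K. \<forall>k\<ge>K. matpow N k $ a $ c * N $ c $ b \<le> matpow N (Suc k) $ a $ b"
  proof (intro exI allI impI)
    fix k
    have nn: "\<And>d. 0 \<le> matpow N k $ a $ d * N $ d $ b"
      using N_pos by (intro mult_nonneg_nonneg matpow_nonneg less_imp_le) auto
    have "matpow N k $ a $ c * N $ c $ b \<le> (\<Sum>d\<in>UNIV. matpow N k $ a $ d * N $ d $ b)"
      by (rule member_le_sum) (use nn in auto)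
    then show "matpow N k $ a $ c * N $ c $ b \<le> matpow N (Suc k) $ a $ b"
      by (simp only: matpow_Suc_right matmul_entry)
  qed
qed

lemma Cp_zero_all:
  assumes "Cp a b = 0" shows "Cp c d = 0"
proof -
  have "Cp a d * N $ d $ b \<le> 0" using Cp_right[where a=a and b=b and c=d] assms by linarith
  then have "Cp a d = 0" using Cp_nonneg[of a d] N_pos[of d b]
    by (simp add: mult_le_0_iff)
  then have "N $ a $ c * Cp c d \<le> 0" using Cp_left[where a=a and b=d and c=c] \<open>Cp a d = 0\<close> by linarith
  then show "Cp c d = 0" using Cp_nonneg[of c d] N_pos[of a c]
    by (simp add: mult_le_0_iff)
qed

lemma Cp_pos: "Cp a b > 0"
proof (rule ccontr)
  assume "\<not> Cp a b > 0"
  then have z: "\<And>c d. Cp c d = 0" using Cp_nonneg[of a b] Cp_zero_all[of a b] by force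
  obtain v where v: "v \<noteq> 0" "M *v v = lp *\<^sub>R v"
    using eig_p by (auto simp: is_eigenvalue_def M_def)
  have ev: "matpow N k *v v = v" for k
  proof -
    have "matpow N k *v v = (\<chi> i. \<Sum>j\<in>UNIV. matpow N k $ i $ j * v $ j)"
      by (simp add: matrix_vector_mult_def)
    also have "\<dots> = (\<chi> i. (\<Sum>j\<in>UNIV. matpow M k $ i $ j * v $ j) / lp ^ k)"
      by (simp add: N_pow sum_divide_distrib)
    also have "\<dots> = (\<chi> i. (matpow M k *v v) $ i / lp ^ k)"
      by (simp add: matrix_vector_mult_def)
    also have "\<dots> = v" using matpow_eigen[OF v(2), of k] lp_pos
      by (simp add: vec_eq_iff)
    finally show ?thesis .
  qed
  have "v $ i = 0" for i
  proof -
    have "(\<lambda>k. \<Sum>j\<in>UNIV. matpow N k $ i $ j * v $ j) \<longlonglongrightarrow> (\<Sum>j\<in>UNIV. Cp i j * v $ j)"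
      by (intro tendsto_intros N_pow_lim)
    moreover have "(\<lambda>k. \<Sum>j\<in>UNIV. matpow N k $ i $ j * v $ j) = (\<lambda>k. v $ i)"
    proof
      fix k
      have "(matpow N k *v v) $ i = v $ i" using ev by simp
      then show "(\<Sum>j\<in>UNIV. matpow N k $ i $ j * v $ j) = v $ i"
        by (simp add: matrix_vector_mult_def)
    qed
    ultimately have "(\<lambda>k. v $ i) \<longlonglongrightarrow> 0" by (simp add: z)
    then show ?thesis by (simp add: LIMSEQ_const_iff)
  qed
  then have "v = 0" by (simp add: vec_eq_iff)
  with v show False by simp
qed

end


lemma per_nat: assumes "\<And>i. g (i + p) = g (i::int)" shows "g (i + p * int t) = g i"
proof (induction t arbitrary: i)
  case 0 then show ?case by simp
next
  case (Suc t)
  have "g (i + p * int (Suc t)) = g ((i + p * int t) + p)" by (simp add: algebra_simps)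
  also have "\<dots> = g i" using assms Suc by simp
  finally show ?case .
qed

lemma per_int: assumes "\<And>i. g (i + p) = g (i::int)" shows "g (i + p * t) = g i"
proof (cases "t \<ge> 0")
  case True then show ?thesis using per_nat[where g=g and p=p, OF assms, of i "nat t"] by simp
next
  case False
  have e: "(i + p * t) + p * int (nat (- t)) = i" using False by (simp add: algebra_simps)
  have "g (i + p * t) = g ((i + p * t) + p * int (nat (- t)))"
    by (rule per_nat[where g=g and p=p, OF assms, symmetric])
  also have "\<dots> = g i" by (simp only: e)
  finally show ?thesis .
qed

lemma shift_shift: "shift n (shift m y) = shift (m + n) y"
  by (simp add: shift_def fun_eq_iff algebra_simps)

context ctx6 begin

lemma P_ex: "\<exists>p::nat. p > 0 \<and> (\<forall>i. w (i + int p) = w i \<and> x (i + int p) = x i)"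
proof -
  obtain p1 where p1: "p1 > 0" "\<And>i. w (i + p1) = w i" using per_w by (auto simp: periodic_def)
  obtain p2 where p2: "p2 > 0" "\<And>i. x (i + p2) = x i" using per_x by (auto simp: periodic_def)
  have "w (i + int (nat (p1 * p2))) = w i" for i
    using per_int[where g=w and p=p1, OF p1(2), of i p2] p1 p2 by simp
  moreover have "x (i + int (nat (p1 * p2))) = x i" for i
    using per_int[where g=x and p=p2, OF p2(2), of i p1] p1 p2 by (simp add: mult.commute)
  ultimately show ?thesis using p1 p2 by (intro exI[of _ "nat (p1 * p2)"]) auto
qed

definition P :: nat where
  "P = (LEAST p. p > 0 \<and> (\<forall>i. w (i + int p) = w i \<and> x (i + int p) = x i))"

lemma P_prop: "P > 0 \<and> (\<forall>i. w (i + int P) = w i \<and> x (i + int P) = x i)"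
  unfolding P_def by (rule LeastI_ex[OF P_ex])

lemma P_pos: "P > 0" using P_prop by blast
lemma w_per: "w (i + int P) = w i" using P_prop by blast
lemma x_per: "x (i + int P) = x i" using P_prop by blast

lemma P_min: "0 < p \<Longrightarrow> p < P \<Longrightarrow> \<exists>i. w (i + int p) \<noteq> w i \<or> x (i + int p) \<noteq> x i"
  using not_less_Least[of p "\<lambda>p. p > 0 \<and> (\<forall>i. w (i + int p) = w i \<and> x (i + int p) = x i)"]
  unfolding P_def[symmetric] by auto

lemma w_perm: "w (i + int P * t) = w i" by (rule per_int) (rule w_per)
lemma x_perm: "x (i + int P * t) = x i" by (rule per_int) (rule x_per)

definition S :: "int \<Rightarrow> bool set" where "S i = {w i, x i}"

lemma S_perm: "S (i + int P * t) = S i" by (simp add: S_def w_perm x_perm)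
lemma S_mod: "S (i mod int P + j) = S (i + j)"
proof -
  have "i + j = (i mod int P + j) + int P * (i div int P)" by simp
  then show ?thesis by (metis S_perm)
qed

lemma wx_le: "w i \<le> x i" using wx by (simp add: le_fun_def)

lemma between_S: "(w i \<le> c \<and> c \<le> x i) \<longleftrightarrow> c \<in> S i"
  using wx_le[of i] by (cases c; cases "w i"; cases "x i") (auto simp: S_def)

definition D :: "int \<Rightarrow> real^bool^bool" where
  "D i = (\<chi> a b. if a = b \<and> a \<in> S i then 1 else 0)"

lemma D_idem: "D i ** D i = D i"
  by (auto simp: vec_eq_iff matmul_entry sum_bool D_def)

primrec Pr :: "real^bool^bool \<Rightarrow> int \<Rightarrow> nat \<Rightarrow> real^bool^bool" where
  "Pr A k 0 = D k"
| "Pr A k (Suc n) = Pr A k n ** A ** D (k + int (Suc n))"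

lemma Pr_D: "Pr A k n ** D (k + int n) = Pr A k n"
  by (cases n) (simp_all add: D_idem flip: matrix_mul_assoc)

lemma Pr_split: "Pr A k (n + m) = Pr A k n ** Pr A (k + int n) m"
proof (induction m)
  case 0 then show ?case by (simp add: Pr_D)
next
  case (Suc m)
  have idx: "k + int (Suc (n + m)) = k + int n + int (Suc m)" by simp
  have "Pr A k (n + Suc m) = Pr A k (n + m) ** A ** D (k + int (Suc (n + m)))" by simp
  also have "\<dots> = Pr A k n ** Pr A (k + int n) m ** A ** D (k + int (Suc (n + m)))"
    by (simp only: Suc.IH)
  also have "\<dots> = Pr A k n ** (Pr A (k + int n) m ** A ** D (k + int n + int (Suc m)))"
    by (simp only: idx matrix_mul_assoc)
  finally show ?case by simp
qed

lemma D_perm: "D (i + int P * t) = D i" by (simp add: D_def S_perm)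

lemma Pr_perm: "Pr A (k + int P * t) n = Pr A k n"
proof (induction n)
  case 0 then show ?case by (simp add: D_perm)
next
  case (Suc n)
  have "D (k + int P * t + int (Suc n)) = D (k + int (Suc n))"
    using D_perm[of "k + int (Suc n)" t] by (simp add: algebra_simps)
  then show ?case using Suc by simp
qed

lemma Pr_scale: "Pr (c *\<^sub>R A) k n = c ^ n *\<^sub>R Pr A k n"
proof (induction n)
  case 0 then show ?case by simp
next
  case (Suc n)
  show ?case by (simp add: Suc matrix_scalar_ac scalar_matrix_assoc)
qed

definition valid :: "int \<Rightarrow> nat \<Rightarrow> bool list set" where
  "valid k n = {A. length A = Suc n \<and> (\<forall>i\<le>n. A ! i \<in> S (k + int i))}"

definition pw :: "bool list \<Rightarrow> real" where
  "pw A = (\<Sum>j<length A - 1. f (A ! j) (A ! Suc j))"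

lemma valid_finite: "finite (valid k n)"
  by (rule finite_subset[OF _ finite_list_length[of "Suc n"]]) (auto simp: valid_def)

lemma valid_0: "valid k 0 = (\<lambda>c. [c]) ` S k"
proof (intro set_eqI iffI)
  fix A assume "A \<in> valid k 0"
  then have "length A = 1" "A ! 0 \<in> S k" by (auto simp: valid_def)
  then show "A \<in> (\<lambda>c. [c]) ` S k"
    by (metis One_nat_def image_eqI length_0_conv length_Suc_conv nth_Cons_0)
qed (auto simp: valid_def)

lemma valid_Suc: "valid k (Suc n) = (\<lambda>(A, c). A @ [c]) ` (valid k n \<times> S (k + int (Suc n)))"
proof (intro set_eqI iffI)
  fix B assume B: "B \<in> valid k (Suc n)"
  then have len: "length B = Suc (Suc n)" by (simp add: valid_def)
  have eq: "B = take (Suc n) B @ [B ! Suc n]"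
    using len by (metis lessI take_Suc_conv_app_nth take_all order_refl)
  have "take (Suc n) B \<in> valid k n" using B len by (auto simp: valid_def)
  moreover have "B ! Suc n \<in> S (k + int (Suc n))" using B by (auto simp: valid_def)
  ultimately show "B \<in> (\<lambda>(A, c). A @ [c]) ` (valid k n \<times> S (k + int (Suc n)))"
    using eq by (intro image_eqI[of _ _ "(take (Suc n) B, B ! Suc n)"]) auto
next
  fix B assume "B \<in> (\<lambda>(A, c). A @ [c]) ` (valid k n \<times> S (k + int (Suc n)))"
  then obtain A c where B: "B = A @ [c]" "A \<in> valid k n" "c \<in> S (k + int (Suc n))" by auto
  show "B \<in> valid k (Suc n)" using B
    by (auto simp: valid_def nth_append le_Suc_eq)
qed

lemma pw_snoc: assumes "length A = Suc n" shows "pw (A @ [c]) = pw A + f (last A) c"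
proof -
  have "last A = A ! n" using assms by (metis diff_Suc_1 last_conv_nth length_0_conv nat.distinct(1))
  then show ?thesis using assms by (simp add: pw_def nth_append)
qed

definition F :: "int \<Rightarrow> nat \<Rightarrow> bool \<Rightarrow> real" where
  "F k n b = (\<Sum>A\<in>valid k n. if last A = b then 2 powr pw A else 0)"

lemma F_Pr: "F k n b = (\<Sum>a\<in>UNIV. Pr M k n $ a $ b)"
proof (induction n arbitrary: b)
  case 0
  have "F k 0 b = (\<Sum>c\<in>S k. if c = b then 1 else 0)"
    unfolding F_def valid_0 by (subst sum.reindex) (auto simp: inj_on_def pw_def)
  also have "\<dots> = (if b \<in> S k then 1 else 0)" by (simp add: S_def)
  also have "\<dots> = (\<Sum>a\<in>UNIV. Pr M k 0 $ a $ b)"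
    by (cases b) (auto simp: sum_bool D_def)
  finally show ?case .
next
  case (Suc n)
  let ?S' = "S (k + int (Suc n))"
  have inj: "inj_on (\<lambda>(A, c). A @ [c]) (valid k n \<times> ?S')"
    by (auto simp: inj_on_def)
  have "F k (Suc n) b = (\<Sum>(A, c)\<in>valid k n \<times> ?S'. if c = b then 2 powr pw (A @ [c]) else 0)"
    unfolding F_def valid_Suc by (subst sum.reindex[OF inj]) (auto intro!: sum.cong)
  also have "\<dots> = (\<Sum>A\<in>valid k n. \<Sum>c\<in>?S'. if c = b then 2 powr pw A * M $ last A $ c else 0)"
  proof (subst sum.cartesian_product[symmetric], intro sum.cong refl)
    fix A c assume "A \<in> valid k n"
    then have "length A = Suc n" by (simp add: valid_def)
    then show "(if c = b then 2 powr pw (A @ [c]) else 0) = (if c = b then 2 powr pw A * M $ last A $ c else 0)"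
      by (simp add: pw_snoc powr_add M_entry)
  qed
  also have "\<dots> = (if b \<in> ?S' then 1 else 0) * (\<Sum>A\<in>valid k n. 2 powr pw A * M $ last A $ b)"
    by (simp add: sum_distrib_left sum.delta)
  also have "(\<Sum>A\<in>valid k n. 2 powr pw A * M $ last A $ b) = (\<Sum>A\<in>valid k n. \<Sum>d\<in>UNIV. (if last A = d then 2 powr pw A else 0) * M $ d $ b)"
    by (intro sum.cong refl) (simp add: sum_bool)
  also have "\<dots> = (\<Sum>d\<in>UNIV. F k n d * M $ d $ b)"
    by (subst sum.swap) (simp add: F_def sum_distrib_right)
  also have "\<dots> = (\<Sum>d\<in>UNIV. (\<Sum>a\<in>UNIV. Pr M k n $ a $ d) * M $ d $ b)" by (simp add: Suc)
  also have "(if b \<in> ?S' then 1 else 0) * \<dots> = (\<Sum>a\<in>UNIV. Pr M k (Suc n) $ a $ b)"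
    by (cases b) (auto simp: matmul_entry D_def sum_bool algebra_simps)
  finally show ?case .
qed

definition sument :: "real^bool^bool \<Rightarrow> real" where
  "sument A = (\<Sum>a\<in>UNIV. \<Sum>b\<in>UNIV. A $ a $ b)"

lemma V_Pr: "(\<Sum>A\<in>valid k n. 2 powr pw A) = sument (Pr M k n)"
proof -
  have "(\<Sum>A\<in>valid k n. 2 powr pw A) = (\<Sum>A\<in>valid k n. \<Sum>b\<in>UNIV. if last A = b then 2 powr pw A else 0)"
    by (rule sum.cong[OF refl]) (simp add: sum.delta)
  also have "\<dots> = (\<Sum>b\<in>UNIV. F k n b)" by (subst sum.swap) (simp add: F_def)
  also have "\<dots> = sument (Pr M k n)" by (simp add: F_Pr sument_def, rule sum.swap)
  finally show ?thesis .
qed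

lemma M_N: "M = lp *\<^sub>R N"
  using lp_pos by (simp add: N_def vec_eq_iff)

lemma sument_scale: "sument (c *\<^sub>R A) = c * sument A"
  by (simp add: sument_def sum_distrib_left)

lemma V_PrN: "(\<Sum>A\<in>valid k n. 2 powr pw A) = lp ^ n * sument (Pr N k n)"
  by (simp add: V_Pr M_N Pr_scale sument_scale)

end


context ctx6 begin

abbreviation "X \<equiv> interval_set w x"
abbreviation "phi \<equiv> (\<lambda>y::seq. f (y 0) (y 1))"

lemma X_S: assumes "y \<in> X" shows "\<exists>k. \<forall>i. y i \<in> S (k + i)"
proof -
  obtain z m where z: "y = shift m z" "w \<le> z" "z \<le> x"
    using assms by (auto simp: interval_set_def)
  have "y i \<in> S (m + i)" for i
    using z between_S[of "i + m" "z (i + m)"] by (auto simp: shift_def le_fun_def add.commute)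
  then show ?thesis by blast
qed

lemma blocks_valid:
  assumes "A \<in> blocks X (Suc n)" shows "\<exists>k\<in>{0..<int P}. A \<in> valid k n"
proof -
  obtain y k0 where y: "y \<in> X" "A = map (\<lambda>i. y (k0 + int i)) [0..<Suc n]"
    using assms by (auto simp: blocks_def)
  obtain k1 where k1: "\<And>i. y i \<in> S (k1 + i)" using X_S[OF y(1)] by blast
  let ?k = "(k1 + k0) mod int P"
  have "A ! i \<in> S (?k + int i)" if "i \<le> n" for i
  proof -
    have "A ! i = y (k0 + int i)" using y(2) that by (simp del: upt_Suc)
    moreover have "S (?k + int i) = S (k1 + (k0 + int i))" by (simp add: S_mod add.assoc)
    ultimately show ?thesis using k1 by simp
  qed
  then have "A \<in> valid ?k n" unfolding valid_def using y(2) by (simp del: upt_Suc)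
  moreover have "?k \<in> {0..<int P}" using P_pos by simp
  ultimately show ?thesis by blast
qed

lemma valid_window:
  assumes "A \<in> valid k n" shows "\<exists>y\<in>X. map (\<lambda>i. y (int i)) [0..<Suc n] = A"
proof -
  have len: "length A = Suc n" and inS: "\<And>i. i \<le> n \<Longrightarrow> A ! i \<in> S (k + int i)"
    using assms by (auto simp: valid_def)
  define z where "z = (\<lambda>i. if k \<le> i \<and> i < k + int (Suc n) then A ! nat (i - k) else w i)"
  have "w i \<le> z i \<and> z i \<le> x i" for i
  proof (cases "k \<le> i \<and> i < k + int (Suc n)")
    case True
    then have "A ! nat (i - k) \<in> S (k + int (nat (i - k)))" by (intro inS) auto
    then have "A ! nat (i - k) \<in> S i" using True by simp
    then show ?thesis using True between_S[of i "A ! nat (i - k)"] by (simp add: z_def)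
  next
    case False then show ?thesis using wx_le[of i] by (auto simp: z_def)
  qed
  then have "w \<le> z" "z \<le> x" by (auto simp: le_fun_def)
  then have "shift k z \<in> X" by (auto simp: interval_set_def)
  moreover have "map (\<lambda>i. shift k z (int i)) [0..<Suc n] = A"
    using len by (intro nth_equalityI) (auto simp: shift_def z_def add.commute simp del: upt_Suc)
  ultimately show ?thesis by blast
qed

lemma valid_blocks: "valid k n \<subseteq> blocks X (Suc n)"
proof
  fix A assume "A \<in> valid k n"
  then obtain y where "y \<in> X" "map (\<lambda>i. y (int i)) [0..<Suc n] = A" using valid_window by blast
  then show "A \<in> blocks X (Suc n)" unfolding blocks_def
    by (intro CollectI bexI[of _ y] exI[of _ 0]) auto
qed

lemma blocks_sub: "blocks X (Suc n) \<subseteq> (\<Union>k\<in>{0..<int P}. valid k n)"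
  using blocks_valid by blast

lemma blocks_finite: "finite (blocks X (Suc n))"
  by (rule finite_subset[OF blocks_sub]) (auto intro: valid_finite)

definition Fb :: real where "Fb = \<bar>f False False\<bar> + \<bar>f False True\<bar> + \<bar>f True False\<bar> + \<bar>f True True\<bar>"

lemma f_bound: "\<bar>f a b\<bar> \<le> Fb"
  by (cases a; cases b) (auto simp: Fb_def)

lemma birkhoff_window:
  assumes "map (\<lambda>i. y (int i)) [0..<Suc n] = A"
  shows "birkhoff phi (Suc n) y = pw A + f (A ! n) (y (int n + 1))"
proof -
  have len: "length A = Suc n" using assms[symmetric] by simp
  have Ai: "i \<le> n \<Longrightarrow> A ! i = y (int i)" for i using assms[symmetric] by (auto simp del: upt_Suc)
  have "birkhoff phi (Suc n) y = (\<Sum>j<Suc n. f (y (int j)) (y (int j + 1)))"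
    by (simp add: birkhoff_def shift_def add.commute)
  also have "\<dots> = (\<Sum>j<n. f (y (int j)) (y (int j + 1))) + f (y (int n)) (y (int n + 1))" by simp
  also have "(\<Sum>j<n. f (y (int j)) (y (int j + 1))) = pw A"
    unfolding pw_def len by (intro sum.cong) (auto simp: Ai add.commute)
  finally show ?thesis using Ai[of n] by simp
qed

lemma sup_bounds:
  assumes "A \<in> blocks X (Suc n)"
  shows "pw A - Fb \<le> (SUP y\<in>{y\<in>X. map (\<lambda>i. y (int i)) [0..<Suc n] = A}. birkhoff phi (Suc n) y)"
    and "(SUP y\<in>{y\<in>X. map (\<lambda>i. y (int i)) [0..<Suc n] = A}. birkhoff phi (Suc n) y) \<le> pw A + Fb"
proof -
  let ?T = "{y\<in>X. map (\<lambda>i. y (int i)) [0..<Suc n] = A}"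
  obtain k where "A \<in> valid k n" using blocks_valid[OF assms] by blast
  then obtain y0 where y0: "y0 \<in> ?T" using valid_window by blast
  have bnd: "pw A - Fb \<le> birkhoff phi (Suc n) y \<and> birkhoff phi (Suc n) y \<le> pw A + Fb" if "y \<in> ?T" for y
    using birkhoff_window[of y n A] that f_bound[of "A ! n" "y (int n + 1)"] by auto
  have ne: "?T \<noteq> {}" using y0 by blast
  have bdd: "bdd_above (birkhoff phi (Suc n) ` ?T)"
    using bnd by (intro bdd_aboveI[of _ "pw A + Fb"]) auto
  show "(SUP y\<in>?T. birkhoff phi (Suc n) y) \<le> pw A + Fb"
    using bnd ne by (intro cSUP_least) auto
  have "pw A - Fb \<le> birkhoff phi (Suc n) y0" using bnd y0 by blast
  also have "\<dots> \<le> (SUP y\<in>?T. birkhoff phi (Suc n) y)" using bdd y0 by (rule cSUP_upper2) simp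
  finally show "pw A - Fb \<le> (SUP y\<in>?T. birkhoff phi (Suc n) y)" .
qed

definition Z :: "nat \<Rightarrow> real" where
  "Z m = (\<Sum>A\<in>blocks X m. 2 powr (SUP y\<in>{y\<in>X. map (\<lambda>i. y (int i)) [0..<m] = A}. birkhoff phi m y))"

lemma pressure_Z: "pressure_seq X phi m = 1 / real m * log 2 (Z m)"
  by (simp add: pressure_seq_def Z_def)

definition W :: "nat \<Rightarrow> real" where
  "W n = (\<Sum>A\<in>blocks X (Suc n). 2 powr pw A)"

lemma Z_bounds: "2 powr (- Fb) * W n \<le> Z (Suc n) \<and> Z (Suc n) \<le> 2 powr Fb * W n"
proof -
  have "2 powr (- Fb) * W n = (\<Sum>A\<in>blocks X (Suc n). 2 powr (pw A - Fb))"
    by (simp add: W_def sum_distrib_left powr_diff powr_minus divide_inverse mult.commute)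
  also have "\<dots> \<le> Z (Suc n)" unfolding Z_def
    by (intro sum_mono) (use sup_bounds(1) in auto)
  finally have 1: "2 powr (- Fb) * W n \<le> Z (Suc n)" .
  have "Z (Suc n) \<le> (\<Sum>A\<in>blocks X (Suc n). 2 powr (pw A + Fb))" unfolding Z_def
    by (intro sum_mono) (use sup_bounds(2) in auto)
  also have "\<dots> = 2 powr Fb * W n"
    by (simp add: W_def sum_distrib_left powr_add mult.commute)
  finally show ?thesis using 1 by simp
qed

lemma W_lower: "(\<Sum>A\<in>valid k n. 2 powr pw A) \<le> W n"
  unfolding W_def by (rule sum_mono2[OF blocks_finite valid_blocks]) auto

lemma W_upper: "W n \<le> (\<Sum>k\<in>{0..<int P}. \<Sum>A\<in>valid k n. 2 powr pw A)"
proof -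
  let ?B = "blocks X (Suc n)"
  have "W n \<le> (\<Sum>A\<in>?B. \<Sum>k\<in>{0..<int P}. if A \<in> valid k n then 2 powr pw A else 0)"
    unfolding W_def
  proof (intro sum_mono)
    fix A assume "A \<in> ?B"
    then obtain k where k: "k \<in> {0..<int P}" "A \<in> valid k n" using blocks_valid by blast
    have "2 powr pw A = (if A \<in> valid k n then 2 powr pw A else 0)" using k by simp
    also have "\<dots> \<le> (\<Sum>k\<in>{0..<int P}. if A \<in> valid k n then 2 powr pw A else 0)"
      by (rule member_le_sum[OF k(1)]) auto
    finally show "2 powr pw A \<le> \<dots>" .
  qed
  also have "\<dots> = (\<Sum>k\<in>{0..<int P}. \<Sum>A\<in>{A\<in>?B. A \<in> valid k n}. 2 powr pw A)"
    by (subst sum.swap) (simp add: sum.inter_filter[OF blocks_finite])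
  also have "\<dots> \<le> (\<Sum>k\<in>{0..<int P}. \<Sum>A\<in>valid k n. 2 powr pw A)"
    by (intro sum_mono sum_mono2 valid_finite) auto
  finally show ?thesis .
qed

end


lemma periodic_growth:
  fixes sg :: "'k \<Rightarrow> nat \<Rightarrow> real"
  assumes K: "finite K" and P: "P > 0" and q: "q > 0"
    and pos: "\<And>k n. k \<in> K \<Longrightarrow> sg k n > 0"
    and rec: "\<And>k n. k \<in> K \<Longrightarrow> n \<ge> nz \<Longrightarrow> sg k (n + P) = q * sg k n"
  shows "\<exists>c C. c > 0 \<and> C > 0 \<and> (\<forall>k\<in>K. \<forall>n. c * (root P q) ^ n \<le> sg k n \<and> sg k n \<le> C * (root P q) ^ n)"
proof -
  define B where "B = root P q"
  have B: "B > 0" "B ^ P = q" using P q by (auto simp: B_def real_root_pow_pos)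
  define rh where "rh k n = sg k n / B ^ n" for k n
  have rh_per: "rh k (n + P) = rh k n" if "k \<in> K" "n \<ge> nz" for k n
    using rec[OF that] B q by (simp add: rh_def power_add)
  define R where "R = (\<lambda>(k, n). rh k n) ` (K \<times> {..<nz + P})"
  have finR: "finite R" using K by (simp add: R_def)
  have inR: "rh k n \<in> R" if "k \<in> K" for k n
  proof (induction n rule: less_induct)
    case (less n)
    show ?case
    proof (cases "n < nz + P")
      case True then show ?thesis using that by (force simp: R_def)
    next
      case False
      then have "n = (n - P) + P" "n - P \<ge> nz" "n - P < n" using P by auto
      then show ?thesis using rh_per[OF that, of "n - P"] less[of "n - P"] by metis
    qed
  qed
  have Rpos: "r > 0" if "r \<in> R" for r
    using that pos B by (auto simp: R_def rh_def)
  show ?thesis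
  proof (cases "K = {}")
    case True then show ?thesis by (intro exI[of _ 1]) auto
  next
    case False
    then obtain k0 where "k0 \<in> K" by blast
    then have Rne: "R \<noteq> {}" using inR by blast
    have cpos: "Min R > 0" using Rpos finR Rne by auto
    have Cpos: "Max R > 0" using Rpos finR Rne by auto
    have "Min R * B ^ n \<le> sg k n \<and> sg k n \<le> Max R * B ^ n" if "k \<in> K" for k n
    proof -
      have "Min R \<le> rh k n" "rh k n \<le> Max R" using inR[OF that] finR by auto
      moreover have "sg k n = rh k n * B ^ n" using B by (simp add: rh_def)
      ultimately show ?thesis using B by (simp add: mult_right_mono)
    qed
    then show ?thesis using cpos Cpos unfolding B_def by blast
  qed
qed

lemma conv_bounds:
  fixes sg :: "nat \<Rightarrow> real"
  assumes pos: "\<And>n. sg n > 0" and lim: "sg \<longlonglongrightarrow> L" and L: "L > 0"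
  shows "\<exists>c C. c > 0 \<and> C > 0 \<and> (\<forall>n. c \<le> sg n \<and> sg n \<le> C)"
proof -
  have "eventually (\<lambda>n. L / 2 < sg n) sequentially"
    using lim L by (intro order_tendstoD(1)) auto
  then obtain N where N: "\<And>n. n \<ge> N \<Longrightarrow> L / 2 < sg n" by (auto simp: eventually_sequentially)
  obtain C where C: "C > 0" "\<And>n. norm (sg n) \<le> C"
    using convergent_imp_Bseq[OF convergentI[OF lim]] by (auto simp: Bseq_def)
  define c where "c = Min (insert (L / 2) (sg ` {..<N}))"
  have "c > 0" unfolding c_def using L pos by (subst Min_gr_iff) auto
  moreover have "c \<le> sg n" for n
  proof (cases "n < N")
    case True then show ?thesis unfolding c_def by (intro Min_le) auto
  next
    case False
    have "c \<le> L / 2" unfolding c_def by (intro Min_le) auto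
    then show ?thesis using N[of n] False by auto
  qed
  moreover have "sg n \<le> C" for n using C(2)[of n] by auto
  ultimately show ?thesis using C(1) by blast
qed

context ctx6 begin

definition forced :: "int \<Rightarrow> bool" where "forced i \<longleftrightarrow> w i = x i"

definition E :: "bool \<Rightarrow> real^bool^bool" where
  "E c = (\<chi> a b. if a = c \<and> b = c then 1 else 0)"

lemma S_free: "\<not> forced i \<Longrightarrow> S i = UNIV"
  using wx_le[of i] by (cases "w i"; cases "x i") (auto simp: forced_def S_def)

lemma D_free: "\<not> forced i \<Longrightarrow> D i = mat 1"
  by (simp add: D_def S_free mat_def vec_eq_iff)

lemma D_forced: "forced i \<Longrightarrow> D i = E (w i)"
  by (auto simp: D_def S_def forced_def E_def vec_eq_iff)

lemma E_sandwich: "E c ** Y ** E c = Y $ c $ c *\<^sub>R E c"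
  by (cases c) (auto simp: vec_eq_iff matmul_entry sum_bool E_def)

lemma Pr_N_nonneg: "Pr N k n $ a $ b \<ge> 0"
proof (induction n arbitrary: a b)
  case 0 then show ?case by (simp add: D_def)
next
  case (Suc n)
  show ?case unfolding Pr.simps matmul_entry
    by (intro sum_nonneg mult_nonneg_nonneg) (auto simp: D_def intro: Suc less_imp_le N_pos)
qed

lemma Pr_N_pos: "a \<in> S k \<Longrightarrow> b \<in> S (k + int n) \<Longrightarrow> (n = 0 \<longrightarrow> a = b) \<Longrightarrow> Pr N k n $ a $ b > 0"
proof (induction n arbitrary: b)
  case 0 then show ?case by (simp add: D_def)
next
  case (Suc n)
  let ?c = "if n = 0 then a else w (k + int n)"
  have c: "?c \<in> S (k + int n)" using Suc.prems(1) by (simp add: S_def)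
  have "(Pr N k n ** N) $ a $ b = (\<Sum>d\<in>UNIV. Pr N k n $ a $ d * N $ d $ b)" by (simp add: matmul_entry)
  also have "\<dots> \<ge> Pr N k n $ a $ ?c * N $ ?c $ b"
    by (rule member_le_sum) (auto intro!: mult_nonneg_nonneg[OF Pr_N_nonneg less_imp_le[OF N_pos]] simp del: Pr.simps)
  finally have "(Pr N k n ** N) $ a $ b > 0"
    using Suc.IH[OF Suc.prems(1) c] N_pos[of ?c b] by (smt (verit) mult_pos_pos)
  moreover have "(Pr N k (Suc n)) $ a $ b = (Pr N k n ** N) $ a $ b"
    using Suc.prems(2) by (cases b) (auto simp: matmul_entry D_def sum_bool)
  ultimately show ?case by simp
qed

lemma sument_pos: "sument (Pr N k n) > 0"
proof -
  have p: "Pr N k n $ w k $ w (k + int n) > 0" by (rule Pr_N_pos) (auto simp: S_def)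
  have nn: "\<And>a b. Pr N k n $ a $ b \<ge> 0" by (rule Pr_N_nonneg)
  have "Pr N k n $ w k $ w (k + int n) \<le> (\<Sum>b\<in>UNIV. Pr N k n $ w k $ b)"
    by (rule member_le_sum) (auto intro: nn)
  also have "\<dots> \<le> sument (Pr N k n)" unfolding sument_def
    by (rule member_le_sum[of "w k" UNIV "\<lambda>a. \<Sum>b\<in>UNIV. Pr N k n $ a $ b"]) (auto intro: sum_nonneg nn)
  finally show ?thesis using p by linarith
qed

lemma Pr_unforced: "(\<forall>i. \<not> forced i) \<Longrightarrow> Pr A k n = matpow A n"
  by (induction n) (simp_all add: D_free, metis matpow.simps(2) matpow_Suc_right)

lemma growth_unforced:
  assumes "\<forall>i. \<not> forced i"
  shows "\<exists>c C. c > 0 \<and> C > 0 \<and> (\<forall>k n. c * 1 ^ n \<le> sument (Pr N k n) \<and> sument (Pr N k n) \<le> C * 1 ^ n)"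
proof -
  have lim: "(\<lambda>n. sument (matpow N n)) \<longlonglongrightarrow> (\<Sum>a\<in>UNIV. \<Sum>b\<in>UNIV. Cp a b)"
    unfolding sument_def by (intro tendsto_intros N_pow_lim)
  have L: "(\<Sum>a\<in>UNIV. \<Sum>b\<in>UNIV. Cp a b) > 0"
    by (simp add: sum_bool Cp_pos add_pos_pos)
  have pos: "sument (matpow N n) > 0" for n
    using sument_pos[of 0 n] Pr_unforced[OF assms] by simp
  obtain c C where "c > 0" "C > 0" "\<And>n. c \<le> sument (matpow N n) \<and> sument (matpow N n) \<le> C"
    using conv_bounds[OF pos lim L] by blast
  then show ?thesis using Pr_unforced[OF assms] by auto
qed

lemma growth_forced:
  assumes "forced s0"
  defines "q \<equiv> Pr N s0 P $ w s0 $ w s0"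
  shows "q > 0"
    and "\<exists>c C. c > 0 \<and> C > 0 \<and> (\<forall>k\<in>{0..<int P}. \<forall>n. c * (root P q) ^ n \<le> sument (Pr N k n)
            \<and> sument (Pr N k n) \<le> C * (root P q) ^ n)"
proof -
  show qpos: "q > 0" unfolding q_def
    by (rule Pr_N_pos) (auto simp: S_def w_per x_per)
  have Ds: "D (s0 + int P * t) = E (w s0)" for t
    using D_perm[of s0 t] D_forced[OF assms(1)] by simp
  have key: "Pr N s (m + P) = q *\<^sub>R Pr N s m" if s: "s = s0 + int P * t" for s t m
  proof -
    have PsP: "Pr N s P = q *\<^sub>R E (w s0)"
    proof -
      have eq0: "Pr N s P = Pr N s0 P" unfolding s by (rule Pr_perm)
      have D1: "D (s + int P) = E (w s0)" using Ds[of "t + 1"] s by (simp add: algebra_simps)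
      have D2: "D s = E (w s0)" using Ds s by simp
      have "Pr N s P = D s ** Pr N s P ** D (s + int P)"
        using Pr_split[of N s 0 P] Pr_D[of N s P] by simp
      also have "\<dots> = E (w s0) ** Pr N s P ** E (w s0)" by (simp only: D1 D2)
      also have "\<dots> = Pr N s P $ w s0 $ w s0 *\<^sub>R E (w s0)"
        by (rule E_sandwich)
      finally show ?thesis by (simp add: q_def eq0)
    qed
    have "Pr N s (P + m) = Pr N s P ** Pr N (s + int P) m" by (rule Pr_split)
    also have "Pr N (s + int P) m = Pr N s m" using Pr_perm[of N s 1 m] by simp
    also have "Pr N s m = D s ** Pr N s m" using Pr_split[of N s 0 m] by simp
    finally have "Pr N s (P + m) = q *\<^sub>R (E (w s0) ** D s ** Pr N s m)"
      by (simp add: PsP matrix_mul_assoc scalar_matrix_assoc)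
    also have "E (w s0) ** D s = D s"
    proof -
      have h: "D s = E (w s0)" using Ds[of t] s by simp
      show ?thesis using D_idem[of s] unfolding h by assumption
    qed
    finally show ?thesis using \<open>Pr N s m = D s ** Pr N s m\<close>[symmetric] by (simp add: add.commute)
  qed
  have rec: "sument (Pr N k (n + P)) = q * sument (Pr N k n)"
    if "k \<in> {0..<int P}" "n \<ge> P" for k n
  proof -
    define t where "t = (k - s0) div int P + 1"
    define s where "s = s0 + int P * t"
    have dm: "int P * ((k - s0) div int P) + (k - s0) mod int P = k - s0" by (rule mult_div_mod_eq)
    have mb: "0 \<le> (k - s0) mod int P" "(k - s0) mod int P < int P" using P_pos by auto
    have sv: "s = s0 + int P * ((k - s0) div int P) + int P" by (simp add: s_def t_def algebra_simps)
    have "s > k" "s \<le> k + int P" using dm mb sv by linarith+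
    define d where "d = nat (s - k)"
    have d: "s = k + int d" "d \<le> P" using \<open>s > k\<close> \<open>s \<le> k + int P\<close> by (auto simp: d_def)
    have "Pr N k (n + P) = Pr N k (d + ((n - d) + P))" using d that by simp
    also have "\<dots> = Pr N k d ** Pr N s ((n - d) + P)" by (simp add: Pr_split d)
    also have "\<dots> = q *\<^sub>R (Pr N k d ** Pr N s (n - d))"
      by (simp add: key[OF s_def] matrix_scalar_ac scalar_matrix_assoc)
    also have "Pr N k d ** Pr N s (n - d) = Pr N k (d + (n - d))" by (simp add: Pr_split d)
    also have "d + (n - d) = n" using d that by simp
    finally show ?thesis by (simp add: sument_scale)
  qed
  show "\<exists>c C. c > 0 \<and> C > 0 \<and> (\<forall>k\<in>{0..<int P}. \<forall>n. c * (root P q) ^ n \<le> sument (Pr N k n)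
            \<and> sument (Pr N k n) \<le> C * (root P q) ^ n)"
    by (rule periodic_growth[where nz = P]) (use P_pos qpos sument_pos rec in auto)
qed

end


lemma sum_periodic_shift:
  fixes h :: "int \<Rightarrow> real"
  assumes per: "\<And>t. h (t + int P) = h t" and P: "P > 0"
  shows "(\<Sum>i<P. h (a + int i)) = (\<Sum>i<P. h (int i))"
proof -
  obtain p where p: "P = Suc p" using P by (cases P) auto
  have step: "(\<Sum>i<P. h (b + 1 + int i)) = (\<Sum>i<P. h (b + int i))" for b
  proof -
    have 1: "(\<Sum>i<P. h (b + int i)) = h b + (\<Sum>i<p. h (b + int (Suc i)))"
      unfolding p by (subst sum.lessThan_Suc_shift) simp
    have 2: "(\<Sum>i<P. h (b + 1 + int i)) = (\<Sum>i<p. h (b + 1 + int i)) + h (b + 1 + int p)"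
      unfolding p by simp
    have 3: "h (b + 1 + int p) = h b" using per[of b] p by (simp add: add.assoc)
    have 4: "(\<Sum>i<p. h (b + 1 + int i)) = (\<Sum>i<p. h (b + int (Suc i)))"
      by (intro sum.cong) (auto simp: algebra_simps)
    show ?thesis using 1 2 3 4 by simp
  qed
  show ?thesis
  proof (induction a rule: int_induct[where k=0])
    case base then show ?case by simp
  next
    case (step1 i) then show ?case using step[of i] by simp
  next
    case (step2 i) then show ?case using step[of "i - 1"] by simp
  qed
qed

context ctx6 begin

definition gp :: "nat \<Rightarrow> seq \<times> seq" where "gp t = (shift (int t) w, shift (int t) x)"

lemma shift_mod_w: "shift n w = shift (n mod int P) w"
proof -
  have "w (i + n) = w (i + n mod int P)" for i
    using w_perm[of "i + n mod int P" "n div int P"]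
    by (metis add.assoc mult_div_mod_eq add.commute)
  then show ?thesis by (simp add: shift_def fun_eq_iff)
qed

lemma shift_mod_x: "shift n x = shift (n mod int P) x"
proof -
  have "x (i + n) = x (i + n mod int P)" for i
    using x_perm[of "i + n mod int P" "n div int P"]
    by (metis add.assoc mult_div_mod_eq add.commute)
  then show ?thesis by (simp add: shift_def fun_eq_iff)
qed

lemma orbit_eq: "pair_orbit w x = gp ` {0..<P}"
proof (intro set_eqI iffI)
  fix z assume "z \<in> pair_orbit w x"
  then obtain n where z: "z = (shift n w, shift n x)" by (auto simp: pair_orbit_def)
  have "n mod int P = int (nat (n mod int P))" using P_pos by auto
  moreover have "nat (n mod int P) < P" using P_pos by (simp add: nat_less_iff)
  ultimately
  show "z \<in> gp ` {0..<P}" using z shift_mod_w[of n] shift_mod_x[of n]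
    by (intro image_eqI[of _ _ "nat (n mod int P)"]) (auto simp: gp_def)
qed (auto simp: pair_orbit_def gp_def)

lemma gp_inj: "inj_on gp {0..<P}"
proof -
  have *: False if "i < j" "j < P" "gp i = gp j" for i j
  proof -
    have "shift (int i) w = shift (int j) w" "shift (int i) x = shift (int j) x"
      using that(3) by (auto simp: gp_def)
    then have e: "w (k + int i) = w (k + int j)" "x (k + int i) = x (k + int j)" for k
      by (auto simp: shift_def fun_eq_iff)
    have "w (k + int (j - i)) = w k \<and> x (k + int (j - i)) = x k" for k
      using e[of "k - int i"] that(1) by (auto simp: of_nat_diff algebra_simps)
    moreover have "0 < j - i" "j - i < P" using that by auto
    ultimately show False using P_min[of "j - i"] by blast
  qed
  show ?thesis unfolding inj_on_def by (metis * linorder_neqE_nat atLeastLessThan_iff)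
qed

lemma orbit_measure:
  "measure (measure_pmf (pmf_of_set (pair_orbit w x))) C = real (card {t\<in>{0..<P}. gp t \<in> C}) / real P"
proof -
  have fin: "finite (pair_orbit w x)" "pair_orbit w x \<noteq> {}" using P_pos by (auto simp: orbit_eq)
  have "card (pair_orbit w x) = P" using card_image[OF gp_inj] by (simp add: orbit_eq)
  moreover have "pair_orbit w x \<inter> C = gp ` {t\<in>{0..<P}. gp t \<in> C}" by (auto simp: orbit_eq)
  moreover have "card (gp ` {t\<in>{0..<P}. gp t \<in> C}) = card {t\<in>{0..<P}. gp t \<in> C}"
    by (rule card_image) (rule inj_on_subset[OF gp_inj], auto)
  ultimately show ?thesis using measure_pmf_of_set[OF fin(2) fin(1)] by simp
qed

lemma free_iff: "\<not> forced i \<longleftrightarrow> (w i = False \<and> x i = True)"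
  using wx_le[of i] by (cases "w i"; cases "x i") (auto simp: forced_def)

lemma forced_perm: "forced (i + int P * k) = forced i"
  by (simp add: forced_def w_perm x_perm)

definition cset :: "bool \<Rightarrow> bool \<Rightarrow> nat \<Rightarrow> (seq \<times> seq) set" where
  "cset a b l = {(u, v). u 0 = a \<and> v 0 = a \<and>
                (\<forall>j::int. 1 \<le> j \<and> j \<le> int l - 2 \<longrightarrow> u j = False \<and> v j = True) \<and>
                u (int l - 1) = b \<and> v (int l - 1) = b}"

lemma gp_cset: "gp t \<in> cset a b (l + 2) \<longleftrightarrow>
   (forced (int t) \<and> a = w (int t) \<and> (\<forall>j. 1 \<le> j \<and> j \<le> l \<longrightarrow> \<not> forced (int t + int j)) \<and>
    forced (int t + int l + 1) \<and> b = w (int t + int l + 1))"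
proof -
  have A: "(\<forall>j::int. 1 \<le> j \<and> j \<le> int l \<longrightarrow> w (j + int t) = False \<and> x (j + int t) = True) \<longleftrightarrow>
           (\<forall>j. 1 \<le> j \<and> j \<le> l \<longrightarrow> \<not> forced (int t + int j))"
  proof
    assume H: "\<forall>j::int. 1 \<le> j \<and> j \<le> int l \<longrightarrow> w (j + int t) = False \<and> x (j + int t) = True"
    show "\<forall>j. 1 \<le> j \<and> j \<le> l \<longrightarrow> \<not> forced (int t + int j)"
    proof (intro allI impI)
      fix j :: nat assume j: "1 \<le> j \<and> j \<le> l"
      then have "w (int j + int t) = False \<and> x (int j + int t) = True" using H by auto
      then show "\<not> forced (int t + int j)" by (simp add: free_iff add.commute)
    qed
  next
    assume H: "\<forall>j. 1 \<le> j \<and> j \<le> l \<longrightarrow> \<not> forced (int t + int j)"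
    show "\<forall>j::int. 1 \<le> j \<and> j \<le> int l \<longrightarrow> w (j + int t) = False \<and> x (j + int t) = True"
    proof (intro allI impI)
      fix j :: int assume j: "1 \<le> j \<and> j \<le> int l"
      have jj: "1 \<le> nat j" "nat j \<le> l" using j by linarith+
      have "\<not> forced (int t + int (nat j))" using H[rule_format, of "nat j"] jj by simp
      then show "w (j + int t) = False \<and> x (j + int t) = True" using j by (simp add: free_iff add.commute)
    qed
  qed
  have r: "int l + 1 + int t = int t + int l + 1" by simp
  have mem: "gp t \<in> cset a b (l + 2) \<longleftrightarrow> (w (int t) = a \<and> x (int t) = a \<and>
      (\<forall>j::int. 1 \<le> j \<and> j \<le> int l \<longrightarrow> w (j + int t) = False \<and> x (j + int t) = True) \<and>
      w (int t + int l + 1) = b \<and> x (int t + int l + 1) = b)"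
    unfolding gp_def cset_def by (simp add: shift_def ac_simps)
  show ?thesis unfolding mem A forced_def by auto
qed

end

locale ctx6f = ctx6 +
  fixes s0 :: int
  assumes s0f: "forced s0"
begin

lemma nxt_ex: "\<exists>d::nat. d > 0 \<and> forced (t + int d)"
proof -
  define d where "d = nat ((s0 - t - 1) mod int P) + 1"
  have "t + int d = s0 + int P * (- ((s0 - t - 1) div int P))"
  proof -
    have "int P * ((s0 - t - 1) div int P) + (s0 - t - 1) mod int P = s0 - t - 1" by (rule mult_div_mod_eq)
    moreover have "(s0 - t - 1) mod int P \<ge> 0" using P_pos by simp
    ultimately show ?thesis by (simp add: d_def algebra_simps)
  qed
  moreover have "forced (s0 + int P * (- ((s0 - t - 1) div int P)))" by (subst forced_perm) (rule s0f)
  ultimately have "forced (t + int d)" by simp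
  then show ?thesis by (intro exI[of _ d]) (simp add: d_def)
qed

definition nxt :: "int \<Rightarrow> nat" where "nxt t = (LEAST d. d > 0 \<and> forced (t + int d))"

lemma nxt_prop: "nxt t > 0 \<and> forced (t + int (nxt t))"
  unfolding nxt_def using LeastI_ex[OF nxt_ex] .

lemma nxt_pos: "nxt t > 0" using nxt_prop by blast
lemma nxt_forced: "forced (t + int (nxt t))" using nxt_prop by blast
lemma nxt_min: "0 < d \<Longrightarrow> d < nxt t \<Longrightarrow> \<not> forced (t + int d)"
  unfolding nxt_def using not_less_Least by blast
lemma nxt_le: "0 < d \<Longrightarrow> forced (t + int d) \<Longrightarrow> nxt t \<le> d"
  unfolding nxt_def by (rule Least_le) simp

lemma nxt_le_P: "forced t \<Longrightarrow> nxt t \<le> P"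
  using nxt_le[of P t] P_pos forced_perm[of t 1] by simp

lemma nxt_per: "nxt (t + int P) = nxt t"
proof -
  have "forced (t + int P + int d) = forced (t + int d)" for d
    using forced_perm[of "t + int d" 1] by (simp add: algebra_simps)
  then show ?thesis unfolding nxt_def by simp
qed

lemma gp_cset_iff: "gp t \<in> cset a b (l + 2) \<longleftrightarrow>
   (forced (int t) \<and> a = w (int t) \<and> l + 1 = nxt (int t) \<and> b = w (int t + int (nxt (int t))))"
proof
  assume "gp t \<in> cset a b (l + 2)"
  then have H: "forced (int t)" "a = w (int t)" "\<And>j. 1 \<le> j \<Longrightarrow> j \<le> l \<Longrightarrow> \<not> forced (int t + int j)"
    "forced (int t + int l + 1)" "b = w (int t + int l + 1)"
    unfolding gp_cset by auto
  have "forced (int t + int (l + 1))" using H(4) by (simp add: algebra_simps)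
  then have "nxt (int t) \<le> l + 1" using nxt_le[of "l + 1" "int t"] by simp
  moreover have "\<not> nxt (int t) < l + 1"
  proof
    assume "nxt (int t) < l + 1"
    then have "\<not> forced (int t + int (nxt (int t)))" using H(3)[of "nxt (int t)"] nxt_pos[of "int t"] by auto
    then show False using nxt_forced by blast
  qed
  ultimately have e: "l + 1 = nxt (int t)" by simp
  then have e2: "int (nxt (int t)) = int l + 1" by simp
  show "forced (int t) \<and> a = w (int t) \<and> l + 1 = nxt (int t) \<and> b = w (int t + int (nxt (int t)))"
    using H e by (simp add: e2 add.assoc)
next
  assume H: "forced (int t) \<and> a = w (int t) \<and> l + 1 = nxt (int t) \<and> b = w (int t + int (nxt (int t)))"
  have "\<not> forced (int t + int j)" if "1 \<le> j" "j \<le> l" for j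
    using nxt_min[of j "int t"] that H by auto
  moreover have "forced (int t + int l + 1)" using nxt_forced[of "int t"] H
    by (metis add.assoc of_nat_Suc Suc_eq_plus1 add.commute)
  moreover have "b = w (int t + int l + 1)" using H
    by (metis add.assoc of_nat_Suc Suc_eq_plus1 add.commute)
  ultimately show "gp t \<in> cset a b (l + 2)" unfolding gp_cset using H by auto
qed

end


context ctx6 begin

lemma E_entry: "(E a ** Y ** E b) $ a $ b = Y $ a $ b"
  by (cases a; cases b) (auto simp: matmul_entry sum_bool E_def)

lemma mulE_entry: "(Y ** E c) $ a $ d = (if d = c then Y $ a $ c else 0)"
  by (cases c; cases d) (auto simp: matmul_entry sum_bool E_def)

lemma Pr_entry_split:
  assumes "forced (t + int n1)"
  shows "Pr A t (n1 + n2) $ a $ b = Pr A t n1 $ a $ w (t + int n1) * Pr A (t + int n1) n2 $ w (t + int n1) $ b"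
proof -
  let ?c = "w (t + int n1)"
  have Pr1: "Pr A t n1 = Pr A t n1 ** E ?c" using Pr_D[of A t n1] D_forced[OF assms] by simp
  have "Pr A t (n1 + n2) $ a $ b = (\<Sum>d\<in>UNIV. Pr A t n1 $ a $ d * Pr A (t + int n1) n2 $ d $ b)"
    by (simp add: Pr_split matmul_entry)
  also have "\<dots> = (\<Sum>d\<in>UNIV. (if d = ?c then Pr A t n1 $ a $ ?c else 0) * Pr A (t + int n1) n2 $ d $ b)"
    by (subst Pr1) (simp add: mulE_entry)
  also have "\<dots> = Pr A t n1 $ a $ ?c * Pr A (t + int n1) n2 $ ?c $ b"
    by (cases "w (t + int n1)") (simp_all add: sum_bool)
  finally show ?thesis .
qed

end

context ctx6f begin

definition val :: "int \<Rightarrow> real" where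
  "val t = matpow N (nxt t) $ w t $ w (t + int (nxt t))"

definition hv :: "int \<Rightarrow> real" where
  "hv t = (if forced t then val t else 1)"

lemma val_pos: "val t > 0"
  unfolding val_def using nxt_pos[of t] by (intro N_pow_pos) simp

lemma hv_pos: "hv t > 0" by (simp add: hv_def val_pos)

lemma hv_per: "hv (t + int P) = hv t"
proof -
  have f: "forced (t + int P) = forced t" using forced_perm[of t 1] by simp
  have w1: "w (t + int P) = w t" by (rule w_per)
  have w2: "w (t + int P + int (nxt t)) = w (t + int (nxt t))"
    using w_perm[of "t + int (nxt t)" 1] by (simp add: algebra_simps)
  show ?thesis by (simp add: hv_def val_def f w1 w2 nxt_per)
qed

lemma Pr_run_pre: "forced t \<Longrightarrow> i < nxt t \<Longrightarrow> Pr N t i = D t ** matpow N i"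
proof (induction i)
  case 0 then show ?case by simp
next
  case (Suc i)
  have "\<not> forced (t + int (Suc i))" using nxt_min[of "Suc i" t] Suc.prems by simp
  then have "D (t + int (Suc i)) = mat 1" by (rule D_free)
  then have "Pr N t (Suc i) = (D t ** matpow N i) ** N" using Suc by simp
  also have "\<dots> = D t ** matpow N (Suc i)" by (simp only: matpow_Suc_right matrix_mul_assoc)
  finally show ?case .
qed

lemma Pr_run: "forced t \<Longrightarrow> Pr N t (nxt t) $ w t $ w (t + int (nxt t)) = val t"
proof -
  assume ft: "forced t"
  obtain m where m: "nxt t = Suc m" using nxt_pos[of t] by (cases "nxt t") auto
  have "Pr N t (nxt t) = Pr N t m ** N ** D (t + int (Suc m))" by (simp add: m)
  also have "\<dots> = D t ** matpow N m ** N ** D (t + int (Suc m))"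
    using Pr_run_pre[OF ft, of m] m by simp
  also have "\<dots> = D t ** matpow N (Suc m) ** D (t + int (Suc m))"
    by (simp only: matpow_Suc_right matrix_mul_assoc)
  also have "\<dots> = E (w t) ** matpow N (nxt t) ** E (w (t + int (nxt t)))"
    using D_forced[OF ft] D_forced[OF nxt_forced[of t]] m by simp
  finally show ?thesis by (simp add: E_entry val_def)
qed

lemma Pr_fact: "forced t \<Longrightarrow> forced (t + int n) \<Longrightarrow> Pr N t n $ w t $ w (t + int n) = (\<Prod>i<n. hv (t + int i))"
proof (induction n arbitrary: t rule: less_induct)
  case (less n)
  show ?case
  proof (cases "n = 0")
    case True then show ?thesis by (simp add: D_def S_def)
  next
    case False
    let ?g = "nxt t"
    have g: "0 < ?g" "?g \<le> n" using nxt_pos[of t] nxt_le[of n t] False less.prems by auto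
    have fg: "forced (t + int ?g)" by (rule nxt_forced)
    have "Pr N t n $ w t $ w (t + int n) = Pr N t (?g + (n - ?g)) $ w t $ w (t + int n)" using g by simp
    also have "\<dots> = val t * Pr N (t + int ?g) (n - ?g) $ w (t + int ?g) $ w (t + int n)"
      by (simp add: Pr_entry_split[OF fg] Pr_run[OF less.prems(1)])
    also have "Pr N (t + int ?g) (n - ?g) $ w (t + int ?g) $ w (t + int n) = (\<Prod>i<n - ?g. hv (t + int ?g + int i))"
    proof -
      have e: "t + int ?g + int (n - ?g) = t + int n" using g by simp
      have "forced (t + int ?g + int (n - ?g))" using less.prems(2) e by simp
      from less.IH[OF _ fg this] g have "Pr N (t + int ?g) (n - ?g) $ w (t + int ?g) $ w (t + int ?g + int (n - ?g))
          = (\<Prod>i<n - ?g. hv (t + int ?g + int i))" by simp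
      then show ?thesis using e by simp
    qed
    also have "val t * (\<Prod>i<n - ?g. hv (t + int ?g + int i)) = (\<Prod>i<n. hv (t + int i))"
    proof -
      obtain m where m: "?g = Suc m" using g by (cases ?g) auto
      have "(\<Prod>i<?g. hv (t + int i)) = hv t * (\<Prod>i<m. hv (t + int (Suc i)))"
        unfolding m by (subst prod.lessThan_Suc_shift) simp
      also have "(\<Prod>i<m. hv (t + int (Suc i))) = 1"
      proof (rule prod.neutral, intro ballI)
        fix i assume "i \<in> {..<m}"
        then have "\<not> forced (t + int (Suc i))" using nxt_min[of "Suc i" t] m by simp
        then show "hv (t + int (Suc i)) = 1" by (simp add: hv_def)
      qed
      finally have A: "(\<Prod>i<?g. hv (t + int i)) = val t" using less.prems(1) by (simp add: hv_def)
      have "(\<Prod>i<n. hv (t + int i)) = (\<Prod>i<?g. hv (t + int i)) * (\<Prod>i\<in>{?g..<n}. hv (t + int i))"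
        using prod.atLeastLessThan_concat[of 0 ?g n "\<lambda>i. hv (t + int i)"] g by (simp add: lessThan_atLeast0)
      also have "(\<Prod>i\<in>{?g..<n}. hv (t + int i)) = (\<Prod>i<n - ?g. hv (t + int ?g + int i))"
      proof -
        have "(\<Prod>i\<in>{?g..<n}. hv (t + int i)) = (\<Prod>i\<in>{0 + ?g..<(n - ?g) + ?g}. hv (t + int i))"
          using g by simp
        also have "\<dots> = (\<Prod>i\<in>{0..<n - ?g}. hv (t + int (i + ?g)))"
          by (rule prod.shift_bounds_nat_ivl)
        finally show ?thesis by (simp add: lessThan_atLeast0 algebra_simps)
      qed
      finally show ?thesis using A by simp
    qed
    finally show ?thesis .
  qed
qed

definition q :: real where "q = Pr N s0 P $ w s0 $ w s0"

lemma q_prod: "q = (\<Prod>i<P. hv (s0 + int i))"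
proof -
  have "forced (s0 + int P)" using forced_perm[of s0 1] s0f by simp
  from Pr_fact[OF s0f this] show ?thesis by (simp add: q_def w_per)
qed

lemma q_pos: "q > 0" using q_prod hv_pos by (simp add: prod_pos)

lemma log_q: "log 2 q = (\<Sum>i<P. log 2 (hv (int i)))"
proof -
  have "log 2 q = (\<Sum>i<P. log 2 (hv (s0 + int i)))"
    unfolding q_prod log_def using hv_pos
    by (subst ln_prod) (auto simp: sum_divide_distrib dest: less_imp_neq[symmetric])
  also have "\<dots> = (\<Sum>i<P. log 2 (hv (int i)))"
    by (rule sum_periodic_shift[where h = "\<lambda>t. log 2 (hv t)"]) (simp_all add: hv_per P_pos)
  finally show ?thesis .
qed

end


context ctx6 begin

definition mm :: "bool \<Rightarrow> bool \<Rightarrow> nat \<Rightarrow> real" where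
  "mm a b l = measure (measure_pmf (pmf_of_set (pair_orbit w x))) (cset a b l)"

lemma mm_sum: "mm a b l = (\<Sum>t<P. if gp t \<in> cset a b l then 1 else 0) / real P"
proof -
  have "real (card {t\<in>{0..<P}. gp t \<in> cset a b l}) = (\<Sum>t\<in>{t\<in>{0..<P}. gp t \<in> cset a b l}. 1)"
    by simp
  also have "\<dots> = (\<Sum>t<P. if gp t \<in> cset a b l then 1 else 0)"
    by (subst sum.inter_filter) (auto simp: atLeast0LessThan)
  finally show ?thesis by (simp add: mm_def orbit_measure)
qed

lemma gp_cset2: "gp t \<in> cset a b (Suc (Suc l)) \<longleftrightarrow>
   (forced (int t) \<and> a = w (int t) \<and> (\<forall>j. 1 \<le> j \<and> j \<le> l \<longrightarrow> \<not> forced (int t + int j)) \<and>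
    forced (int t + int l + 1) \<and> b = w (int t + int l + 1))"
  using gp_cset[of t a b l] by (simp only: add_2_eq_Suc')

lemma mm_unforced: "(\<forall>i. \<not> forced i) \<Longrightarrow> mm a b (l + 2) = 0"
  unfolding mm_sum add_2_eq_Suc' gp_cset2 by simp

lemma mm_mult: "mm a b l * y = (\<Sum>t<P. (if gp t \<in> cset a b l then y else 0) / real P)"
  unfolding mm_sum sum_divide_distrib sum_distrib_right by (intro sum.cong refl) simp

end

context ctx6f begin

lemma gp_cset_iff2: "gp t \<in> cset a b (Suc (Suc l)) \<longleftrightarrow>
   (forced (int t) \<and> a = w (int t) \<and> l + 1 = nxt (int t) \<and> b = w (int t + int (nxt (int t))))"
  using gp_cset_iff[of t a b l] by (simp only: add_2_eq_Suc')

lemma mm_big: "l \<ge> P \<Longrightarrow> mm a b (Suc (Suc l)) = 0"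
proof -
  assume l: "l \<ge> P"
  have "\<not> gp t \<in> cset a b (Suc (Suc l))" for t
  proof
    assume "gp t \<in> cset a b (Suc (Suc l))"
    then have "forced (int t)" "l + 1 = nxt (int t)" unfolding gp_cset_iff2 by auto
    then show False using nxt_le_P[of "int t"] l by simp
  qed
  then show ?thesis by (simp add: mm_sum)
qed

definition XX :: "bool \<Rightarrow> bool \<Rightarrow> nat \<Rightarrow> real" where
  "XX a b l = log 2 (matpow N (l + 1) $ a $ b)"

lemma inner:
  "(\<Sum>a\<in>UNIV. \<Sum>b\<in>UNIV. \<Sum>l<P. if gp t \<in> cset a b (l + 2) then XX a b l else 0) = log 2 (hv (int t))"
proof (cases "forced (int t)")
  case False
  then show ?thesis by (simp add: gp_cset_iff2 hv_def)
next
  case True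
  let ?A = "w (int t)" and ?B = "w (int t + int (nxt (int t)))" and ?L = "nxt (int t) - 1"
  have L: "?L < P" using nxt_le_P[OF True] nxt_pos[of "int t"] by simp
  have c: "(if gp t \<in> cset a b (l + 2) then XX a b l else 0) =
        (if l = ?L then (if b = ?B then (if a = ?A then XX a b l else 0) else 0) else 0)" for a b l
    using True nxt_pos[of "int t"] unfolding add_2_eq_Suc' gp_cset_iff2 by auto
  have "(\<Sum>a\<in>UNIV. \<Sum>b\<in>UNIV. \<Sum>l<P. if gp t \<in> cset a b (l + 2) then XX a b l else 0) = XX ?A ?B ?L"
    unfolding c using L by (simp add: sum.delta)
  also have "\<dots> = log 2 (hv (int t))"
    using True nxt_pos[of "int t"] by (simp add: XX_def hv_def val_def)
  finally show ?thesis .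
qed

lemma sum_main: "(\<Sum>a\<in>UNIV. \<Sum>b\<in>UNIV. \<Sum>l<P. mm a b (l + 2) * XX a b l) = log 2 q / real P"
proof -
  have "(\<Sum>a\<in>UNIV. \<Sum>b\<in>UNIV. \<Sum>l<P. mm a b (l + 2) * XX a b l)
      = (\<Sum>a\<in>UNIV. \<Sum>b\<in>UNIV. \<Sum>l<P. \<Sum>t<P. (if gp t \<in> cset a b (l + 2) then XX a b l else 0) / real P)"
    by (simp only: mm_mult)
  also have "\<dots> = (\<Sum>t<P. \<Sum>a\<in>UNIV. \<Sum>b\<in>UNIV. \<Sum>l<P. (if gp t \<in> cset a b (l + 2) then XX a b l else 0) / real P)"
  proof -
    have s1: "\<And>a b. (\<Sum>l<P. \<Sum>t<P. (if gp t \<in> cset a b (l + 2) then XX a b l else 0) / real P)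
        = (\<Sum>t<P. \<Sum>l<P. (if gp t \<in> cset a b (l + 2) then XX a b l else 0) / real P)" by (rule sum.swap)
    have s2: "\<And>a. (\<Sum>b\<in>UNIV. \<Sum>t<P. \<Sum>l<P. (if gp t \<in> cset a b (l + 2) then XX a b l else 0) / real P)
        = (\<Sum>t<P. \<Sum>b\<in>UNIV. \<Sum>l<P. (if gp t \<in> cset a b (l + 2) then XX a b l else 0) / real P)" by (rule sum.swap)
    have s3: "(\<Sum>a\<in>UNIV. \<Sum>t<P. \<Sum>b\<in>UNIV. \<Sum>l<P. (if gp t \<in> cset a b (l + 2) then XX a b l else 0) / real P)
        = (\<Sum>t<P. \<Sum>a\<in>UNIV. \<Sum>b\<in>UNIV. \<Sum>l<P. (if gp t \<in> cset a b (l + 2) then XX a b l else 0) / real P)" by (rule sum.swap)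
    show ?thesis by (simp only: s1 s2 s3)
  qed
  also have "\<dots> = (\<Sum>t<P. (\<Sum>a\<in>UNIV. \<Sum>b\<in>UNIV. \<Sum>l<P. if gp t \<in> cset a b (l + 2) then XX a b l else 0) / real P)"
    by (simp only: sum_divide_distrib)
  also have "\<dots> = (\<Sum>t<P. log 2 (hv (int t))) / real P"
    by (simp only: inner sum_divide_distrib)
  also have "\<dots> = log 2 q / real P" by (simp add: log_q)
  finally show ?thesis .
qed

lemma rhs_forced:
  "log 2 lp + (\<Sum>a\<in>UNIV. \<Sum>b\<in>UNIV. \<Sum>l. mm a b (l + 2) * log 2 (Cp a b))
     + (\<Sum>a\<in>UNIV. \<Sum>b\<in>UNIV. \<Sum>l. mm a b (l + 2) * log 2 (1 + Cm a b / Cp a b * (lm / lp) ^ (l + 1)))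
   = log 2 lp + log 2 q / real P"
proof -
  have fin: "(\<Sum>l. mm a b (l + 2) * g l) = (\<Sum>l<P. mm a b (l + 2) * g l)" for a b g
    by (rule suminf_finite) (auto simp: mm_big add_2_eq_Suc')
  have split: "log 2 (Cp a b) + log 2 (1 + Cm a b / Cp a b * (lm / lp) ^ (l + 1)) = XX a b l" for a b l
  proof -
    have cp: "Cp a b > 0" by (rule Cp_pos)
    have e0: "matpow N (l + 1) $ a $ b = Cp a b + Cm a b * (lm / lp) ^ (l + 1)" by (rule N_pow_C)
    have g: "\<And>r. Cp a b + Cm a b * r = Cp a b * (1 + Cm a b / Cp a b * r)" using cp by (simp add: field_simps)
    have e: "matpow N (l + 1) $ a $ b = Cp a b * (1 + Cm a b / Cp a b * (lm / lp) ^ (l + 1))"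
      unfolding e0 by (rule g)
    have pos: "matpow N (l + 1) $ a $ b > 0" by (rule N_pow_pos) simp
    then have "1 + Cm a b / Cp a b * (lm / lp) ^ (l + 1) > 0" using e cp by (simp add: zero_less_mult_iff)
    then show ?thesis unfolding XX_def e using cp by (simp add: log_mult)
  qed
  have "(\<Sum>a\<in>UNIV. \<Sum>b\<in>UNIV. \<Sum>l. mm a b (l + 2) * log 2 (Cp a b))
     + (\<Sum>a\<in>UNIV. \<Sum>b\<in>UNIV. \<Sum>l. mm a b (l + 2) * log 2 (1 + Cm a b / Cp a b * (lm / lp) ^ (l + 1)))
     = (\<Sum>a\<in>UNIV. \<Sum>b\<in>UNIV. \<Sum>l<P. mm a b (l + 2) * (log 2 (Cp a b) + log 2 (1 + Cm a b / Cp a b * (lm / lp) ^ (l + 1))))"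
    by (simp only: fin sum.distrib[symmetric] distrib_left)
  also have "\<dots> = (\<Sum>a\<in>UNIV. \<Sum>b\<in>UNIV. \<Sum>l<P. mm a b (l + 2) * XX a b l)" by (simp only: split)
  also have "\<dots> = log 2 q / real P" by (rule sum_main)
  finally show ?thesis by simp
qed

end

context ctx6 begin

lemma rhs_unforced:
  assumes "\<forall>i. \<not> forced i"
  shows "log 2 lp + (\<Sum>a\<in>UNIV. \<Sum>b\<in>UNIV. \<Sum>l. mm a b (l + 2) * log 2 (Cp a b))
     + (\<Sum>a\<in>UNIV. \<Sum>b\<in>UNIV. \<Sum>l. mm a b (l + 2) * log 2 (1 + Cm a b / Cp a b * (lm / lp) ^ (l + 1)))
   = log 2 lp"
  by (simp add: mm_unforced[OF assms, unfolded add_2_eq_Suc'])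

end


lemma log_limit:
  fixes Z :: "nat \<Rightarrow> real"
  assumes c1: "c1 > 0" and G: "G > 0"
    and lo: "\<And>n. c1 * G ^ n \<le> Z (Suc n)" and hi: "\<And>n. Z (Suc n) \<le> c2 * G ^ n"
  shows "(\<lambda>m. 1 / real m * log 2 (Z m)) \<longlonglongrightarrow> log 2 G"
proof -
  have c2: "c2 > 0" using lo[of 0] hi[of 0] c1 by simp
  have lim: "(\<lambda>n. (log 2 c + real n * log 2 G) / real (Suc n)) \<longlonglongrightarrow> log 2 G" for c
  proof -
    have e: "(log 2 c + real n * log 2 G) / real (Suc n) = log 2 G + (log 2 c - log 2 G) * inverse (real (Suc n))" for n
      by (simp add: field_simps)
    have "(\<lambda>n. log 2 G + (log 2 c - log 2 G) * inverse (real (Suc n))) \<longlonglongrightarrow> log 2 G + (log 2 c - log 2 G) * 0"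
      by (intro tendsto_intros LIMSEQ_inverse_real_of_nat)
    then show ?thesis unfolding e by simp
  qed
  have L: "(log 2 c1 + real n * log 2 G) / real (Suc n) \<le> 1 / real (Suc n) * log 2 (Z (Suc n))" for n
  proof -
    have zp: "0 < Z (Suc n)" using lo[of n] mult_pos_pos[OF c1 zero_less_power[OF G, of n]] by linarith
    have "log 2 (c1 * G ^ n) \<le> log 2 (Z (Suc n))"
      using lo[of n] c1 G zp by (subst log_le_cancel_iff) auto
    then show ?thesis using c1 G by (simp add: log_mult log_nat_power divide_right_mono)
  qed
  have U: "1 / real (Suc n) * log 2 (Z (Suc n)) \<le> (log 2 c2 + real n * log 2 G) / real (Suc n)" for n
  proof -
    have "Z (Suc n) > 0" using lo[of n] mult_pos_pos[OF c1 zero_less_power[OF G, of n]] by linarith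
    then have "log 2 (Z (Suc n)) \<le> log 2 (c2 * G ^ n)"
      using hi[of n] c2 G by (subst log_le_cancel_iff) auto
    then show ?thesis using c2 G by (simp add: log_mult log_nat_power divide_right_mono)
  qed
  have "(\<lambda>n. 1 / real (Suc n) * log 2 (Z (Suc n))) \<longlonglongrightarrow> log 2 G"
    by (rule tendsto_sandwich[OF _ _ lim[of c1] lim[of c2]]) (use L U in auto)
  then show ?thesis by (rule LIMSEQ_imp_Suc[where f = "\<lambda>m. 1 / real m * log 2 (Z m)"])
qed

context ctx6 begin

lemma limit_from_growth:
  assumes B: "B > 0" and c: "c > 0" and C: "C > 0"
    and bnd: "\<And>k n. k \<in> {0..<int P} \<Longrightarrow> c * B ^ n \<le> sument (Pr N k n) \<and> sument (Pr N k n) \<le> C * B ^ n"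
  shows "pressure_seq X phi \<longlonglongrightarrow> log 2 (lp * B)"
proof -
  have lo: "(2 powr (- Fb) * c) * (lp * B) ^ n \<le> Z (Suc n)" for n
  proof -
    have "(2 powr (- Fb) * c) * (lp * B) ^ n = 2 powr (- Fb) * (lp ^ n * (c * B ^ n))"
      by (simp add: power_mult_distrib)
    also have "\<dots> \<le> 2 powr (- Fb) * (lp ^ n * sument (Pr N 0 n))"
      using bnd[of 0 n] P_pos lp_pos by (intro mult_left_mono) auto
    also have "\<dots> = 2 powr (- Fb) * (\<Sum>A\<in>valid 0 n. 2 powr pw A)" by (simp add: V_PrN)
    also have "\<dots> \<le> 2 powr (- Fb) * W n" by (intro mult_left_mono W_lower) auto
    also have "\<dots> \<le> Z (Suc n)" using Z_bounds by blast
    finally show ?thesis .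
  qed
  have hi: "Z (Suc n) \<le> (2 powr Fb * (real P * C)) * (lp * B) ^ n" for n
  proof -
    have "Z (Suc n) \<le> 2 powr Fb * W n" using Z_bounds by blast
    also have "\<dots> \<le> 2 powr Fb * (\<Sum>k\<in>{0..<int P}. \<Sum>A\<in>valid k n. 2 powr pw A)"
      by (intro mult_left_mono W_upper) auto
    also have "(\<Sum>k\<in>{0..<int P}. \<Sum>A\<in>valid k n. 2 powr pw A) = (\<Sum>k\<in>{0..<int P}. lp ^ n * sument (Pr N k n))"
      by (simp add: V_PrN)
    also have "\<dots> \<le> (\<Sum>k\<in>{0..<int P}. lp ^ n * (C * B ^ n))"
      using bnd lp_pos by (intro sum_mono mult_left_mono) auto
    also have "\<dots> = real P * C * (lp * B) ^ n" by (simp add: power_mult_distrib)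
    finally show ?thesis by (simp add: mult.assoc)
  qed
  have "(\<lambda>m. 1 / real m * log 2 (Z m)) \<longlonglongrightarrow> log 2 (lp * B)"
    by (rule log_limit[OF _ _ lo hi]) (use c B lp_pos in auto)
  moreover have "pressure_seq X phi = (\<lambda>m. 1 / real m * log 2 (Z m))" by (rule ext) (rule pressure_Z)
  ultimately show ?thesis by simp
qed

lemma main:
  "pressure_seq X phi \<longlonglongrightarrow> log 2 lp + (\<Sum>a\<in>UNIV. \<Sum>b\<in>UNIV. \<Sum>l. mm a b (l + 2) * log 2 (Cp a b))
     + (\<Sum>a\<in>UNIV. \<Sum>b\<in>UNIV. \<Sum>l. mm a b (l + 2) * log 2 (1 + Cm a b / Cp a b * (lm / lp) ^ (l + 1)))"
proof (cases "\<exists>s0. forced s0")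
  case True
  then obtain s0 where s0: "forced s0" by blast
  interpret F: ctx6f w x f lp lm Cp Cm s0 by unfold_locales (rule s0)
  obtain c C where cC: "c > 0" "C > 0"
    "\<And>k n. k \<in> {0..<int P} \<Longrightarrow> c * (root P F.q) ^ n \<le> sument (Pr N k n) \<and> sument (Pr N k n) \<le> C * (root P F.q) ^ n"
    using growth_forced(2)[OF s0] unfolding F.q_def by blast
  have B: "root P F.q > 0" using F.q_pos P_pos by simp
  have "pressure_seq X phi \<longlonglongrightarrow> log 2 (lp * root P F.q)"
    by (rule limit_from_growth[OF B cC])
  moreover have "log 2 (lp * root P F.q) = log 2 lp + log 2 F.q / real P"
    using B lp_pos F.q_pos P_pos by (simp add: log_mult log_root)
  ultimately have "pressure_seq X phi \<longlonglongrightarrow> log 2 lp + log 2 F.q / real P" by simp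
  then show ?thesis unfolding F.rhs_forced .
next
  case False
  then have nf: "\<forall>i. \<not> forced i" by blast
  obtain c C where cC: "c > 0" "C > 0"
    "\<And>k n. c * 1 ^ n \<le> sument (Pr N k n) \<and> sument (Pr N k n) \<le> C * 1 ^ n"
    using growth_unforced[OF nf] by blast
  have "pressure_seq X phi \<longlonglongrightarrow> log 2 (lp * 1)"
    by (rule limit_from_growth[of 1 c C]) (use cC in auto)
  then have "pressure_seq X phi \<longlonglongrightarrow> log 2 lp" by simp
  then show ?thesis unfolding rhs_unforced[OF nf] .
qed

end

theorem theorem6p2:
  fixes w x :: seq
    and f :: "bool \<Rightarrow> bool \<Rightarrow> real"
    and lp lm :: real
    and Cp Cm :: "bool \<Rightarrow> bool \<Rightarrow> real"
  assumes "periodic w" and "periodic x" and "w \<le> x"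
    and "is_eigenvalue (\<chi> a b. 2 powr f a b) lp"
    and "is_eigenvalue (\<chi> a b. 2 powr f a b) lm"
    and "lm < lp" and "lp > 0" and "lp > \<bar>lm\<bar>"
    and "\<And>a b n. n \<ge> 1 \<Longrightarrow>
           matpow (\<chi> a b. 2 powr f a b) (n - 1) $ a $ b = Cp a b * lp ^ (n - 1) + Cm a b * lm ^ (n - 1)"
  shows
    "let \<rho> = measure_pmf (pmf_of_set (pair_orbit w x));
         m = (\<lambda>a b (l::nat). measure \<rho> {(u, v). u 0 = a \<and> v 0 = a \<and>
                (\<forall>j::int. 1 \<le> j \<and> j \<le> int l - 2 \<longrightarrow> u j = False \<and> v j = True) \<and>
                u (int l - 1) = b \<and> v (int l - 1) = b})
     in (pressure_seq (interval_set w x) (\<lambda>y. f (y 0) (y 1)))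
        \<longlonglongrightarrow> log 2 lp
            + (\<Sum>a\<in>UNIV. \<Sum>b\<in>UNIV. \<Sum>l. m a b (l + 2) * log 2 (Cp a b))
            + (\<Sum>a\<in>UNIV. \<Sum>b\<in>UNIV. \<Sum>l. m a b (l + 2) *
                 log 2 (1 + Cm a b / Cp a b * (lm / lp) ^ (l + 1)))"
proof -
  interpret ctx6 w x f lp lm Cp Cm
    by unfold_locales (use assms in auto)
  show ?thesis using main unfolding Let_def mm_def cset_def .
qed


end
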